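(* Let $H$ be a real symmetric positive definite $d\times d$ matrix and $L$ a real $d\times d$ matrix with $L^TH+HL=0$. Consider an $s$-stage explicit Runge–Kutta method ($s\ge 4$) applied to $\frac{d}{dt}u=Lu$, i.e. $u_{n+1}=G_s u_n$ with $G_s=\sum_{k=0}^s a_k (hL)^k$, $a_0=1$, $a_s\neq0$, $h>0$, and suppose the method is of fourth order, i.e. $a_k=1/k!$ for $k=1,2,3,4$. Suppose that $b_k=0$ for all $3\le k\le s-2$ and that $b_{s-1}=a_{s-1}^2-2a_sa_{s-2}<0$. Then the order of energy accuracy is $r=2s-3$. Furthermore, the method is strongly stable (i.e. $\|u_{n+1}\|_H\le\|u_n\|_H$ for every $u_n$) provided $$h\|L\|\le \lambda=\sqrt{\frac{2a_sa_{s-2}-a_{s-1}^2}{a_s^2}}.$$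
   Context: For $0\le k\le s$, $b_k=\sum_{i=\max(0,2k-s)}^{\min(2k,s)}(-1)^{k+i}a_i a_{2k-i}$. With energy $\mathcal{E}=\tfrac12\|u\|_H^2=\tfrac12\langle u,Hu\rangle$, one has $\mathcal{E}_{n+1}=\mathcal{E}_n+\tfrac12\sum_{k=1}^s b_k h^{2k}\|L^k u_n\|_H^2$. The leading index $m$ is the smallest $k\ge1$ with $b_k\ne0$ and the order of energy accuracy is $r=2m-1$. Here $\|\cdot\|_H$ is the norm $\|x\|_H=\sqrt{\langle x,Hx\rangle}$ and $\|L\|=\sup_{\|v\|_H=1}\|Lv\|_H$. *)

theory Defs
  imports "HOL-Analysis.Analysis"
begin

text \<open>Real d x d matrices are modelled as real^'n^'n with 'n a finite index type (d = CARD('n)).\<close>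

definition sym_pos_def :: "real^'n^'n \<Rightarrow> bool" where
  "sym_pos_def H \<longleftrightarrow> transpose H = H \<and> (\<forall>x. x \<noteq> 0 \<longrightarrow> x \<bullet> (H *v x) > 0)"

definition Hnorm :: "real^'n^'n \<Rightarrow> real^'n \<Rightarrow> real" where
  "Hnorm H x = sqrt (x \<bullet> (H *v x))"

definition Hopnorm :: "real^'n^'n \<Rightarrow> real^'n^'n \<Rightarrow> real" where
  "Hopnorm H L = Sup {Hnorm H (L *v v) | v. Hnorm H v = 1}"

primrec matpow :: "real^'n^'n \<Rightarrow> nat \<Rightarrow> real^'n^'n" where
  "matpow A 0 = mat 1"
| "matpow A (Suc k) = A ** matpow A k"

definition RK_matrix :: "(nat \<Rightarrow> real) \<Rightarrow> nat \<Rightarrow> real \<Rightarrow> real^'n^'n \<Rightarrow> real^'n^'n" where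
  "RK_matrix a s h L = (\<Sum>k=0..s. (a k * h ^ k) *\<^sub>R matpow L k)"

definition bcoef :: "(nat \<Rightarrow> real) \<Rightarrow> nat \<Rightarrow> nat \<Rightarrow> real" where
  "bcoef a s k = (\<Sum>i = max 0 (2*k - s) .. min (2*k) s. (-1) ^ (k + i) * a i * a (2*k - i))"

definition leading_index :: "(nat \<Rightarrow> real) \<Rightarrow> nat \<Rightarrow> nat" where
  "leading_index a s = (LEAST k. 1 \<le> k \<and> bcoef a s k \<noteq> 0)"

definition energy_order :: "(nat \<Rightarrow> real) \<Rightarrow> nat \<Rightarrow> nat" where
  "energy_order a s = 2 * leading_index a s - 1"

end

theory Submission
  imports Defs
begin

lemma ip_sym:
  fixes H :: "real^'n^'n"
  assumes "transpose H = H"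
  shows "x \<bullet> (H *v y) = y \<bullet> (H *v x)"
proof -
  have "y \<bullet> (H *v x) = (y v* H) \<bullet> x" by (simp add: dot_lmul_matrix)
  also have "y v* H = transpose H *v y" by simp
  also have "\<dots> = H *v y" using assms by simp
  finally show ?thesis by (simp add: inner_commute)
qed

lemma ip_skew:
  fixes H L :: "real^'n^'n"
  assumes "transpose L ** H + H ** L = 0"
  shows "(L *v x) \<bullet> (H *v y) = - (x \<bullet> (H *v (L *v y)))"
proof -
  have "(L *v x) \<bullet> (H *v y) = (x v* transpose L) \<bullet> (H *v y)" by (simp only: vector_transpose_matrix)
  also have "\<dots> = x \<bullet> (transpose L *v (H *v y))" by (rule dot_lmul_matrix)
  also have "transpose L *v (H *v y) = (transpose L ** H) *v y" by (simp add: matrix_vector_mul_assoc)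
  also have "transpose L ** H = 0 - H ** L" using assms by (metis add_diff_cancel_right' diff_0)
  also have "(0 - H ** L) *v y = - (H *v (L *v y))"
    by (metis matrix_vector_mult_diff_rdistrib matrix_vector_mult_0 diff_0 matrix_vector_mul_assoc)
  finally show ?thesis by simp
qed

lemma matpow_Suc_vec: "matpow L (Suc k) *v u = L *v (matpow L k *v u)"
  by (simp add: matrix_vector_mul_assoc)

lemma sum_mat_vec: "finite A \<Longrightarrow> (\<Sum>k\<in>A. f k) *v u = (\<Sum>k\<in>A. (f k :: real^'n^'m) *v u)"
  by (induction A rule: finite_induct) (auto simp: matrix_vector_mult_add_rdistrib)

lemma RK_vec: "RK_matrix a s h L *v u = (\<Sum>k=0..s. (a k * h ^ k) *\<^sub>R (matpow L k *v u))"
  unfolding RK_matrix_def by (simp add: sum_mat_vec scaleR_matrix_vector_assoc)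

lemma e_shift:
  fixes H L :: "real^'n^'n"
  assumes "transpose L ** H + H ** L = 0"
  shows "(matpow L (Suc i) *v u) \<bullet> (H *v (matpow L j *v u)) = - ((matpow L i *v u) \<bullet> (H *v (matpow L (Suc j) *v u)))"
  unfolding matpow_Suc_vec using ip_skew[OF assms] by simp

lemma e_gen:
  fixes H L :: "real^'n^'n"
  assumes "transpose L ** H + H ** L = 0"
  shows "(matpow L i *v u) \<bullet> (H *v (matpow L j *v u)) = (-1)^i * (u \<bullet> (H *v (matpow L (i+j) *v u)))"
proof (induction i arbitrary: j)
  case 0 then show ?case by simp
next
  case (Suc i)
  show ?case using e_shift[OF assms, of i u j] Suc[of "Suc j"] by simp
qed

lemma e_odd:
  fixes H L :: "real^'n^'n"
  assumes "transpose L ** H + H ** L = 0" "transpose H = H" "odd m"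
  shows "u \<bullet> (H *v (matpow L m *v u)) = 0"
proof -
  have "(matpow L m *v u) \<bullet> (H *v (matpow L 0 *v u)) = - (u \<bullet> (H *v (matpow L m *v u)))"
    using e_gen[OF assms(1), of m u 0] assms(3) by simp
  moreover have "(matpow L m *v u) \<bullet> (H *v (matpow L 0 *v u)) = u \<bullet> (H *v (matpow L m *v u))"
    using ip_sym[OF assms(2)] by simp
  ultimately show ?thesis by simp
qed

lemma e_even:
  fixes H L :: "real^'n^'n"
  assumes "transpose L ** H + H ** L = 0" "i \<le> 2*k"
  shows "(matpow L i *v u) \<bullet> (H *v (matpow L (2*k-i) *v u)) = (-1)^(k+i) * ((matpow L k *v u) \<bullet> (H *v (matpow L k *v u)))"
proof -
  have 1: "(matpow L k *v u) \<bullet> (H *v (matpow L k *v u)) = (-1)^k * (u \<bullet> (H *v (matpow L (2*k) *v u)))"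
    using e_gen[OF assms(1), of k u k] by (simp add: mult_2)
  have "((-1::real)^k) * (-1)^k = 1" by (simp add: power_mult_distrib[symmetric])
  then have 2: "u \<bullet> (H *v (matpow L (2*k) *v u)) = (-1)^k * ((matpow L k *v u) \<bullet> (H *v (matpow L k *v u)))"
    using 1 by (metis mult.assoc mult_1)
  show ?thesis using e_gen[OF assms(1), of i u "2*k-i"] assms(2) 2 by (simp add: power_add)
qed


lemma mat_vec_sum: "finite A \<Longrightarrow> M *v (\<Sum>k\<in>A. f k) = (\<Sum>k\<in>A. M *v (f k :: real^'n))"
  by (induction A rule: finite_induct) (auto simp: matrix_vector_right_distrib)

lemma bcoef_ext:
  assumes "k \<le> s"
  shows "(\<Sum>i\<le>2*k. (-1)^(k+i) * (if i \<le> s then a i else 0) * (if 2*k-i \<le> s then a (2*k-i) else 0))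
     = bcoef a s k"
proof -
  have sub: "{max 0 (2*k - s) .. min (2*k) s} \<subseteq> {..2*k}" by auto
  show ?thesis unfolding bcoef_def
    apply (rule sum.mono_neutral_cong_right[OF _ sub])
    using assms by auto
qed

lemma energy_identity:
  fixes H L :: "real^'n^'n"
  assumes skew: "transpose L ** H + H ** L = 0" and Hs: "transpose H = H"
  shows "(RK_matrix a s h L *v u) \<bullet> (H *v (RK_matrix a s h L *v u)) =
    (\<Sum>k\<le>s. bcoef a s k * h^(2*k) * ((matpow L k *v u) \<bullet> (H *v (matpow L k *v u))))"
proof -
  define a' where "a' i = (if i \<le> s then a i else 0)" for i
  define c where "c i = a' i * h^i" for i
  define E where "E i j = (matpow L i *v u) \<bullet> (H *v (matpow L j *v u))" for i j
  have "(RK_matrix a s h L *v u) \<bullet> (H *v (RK_matrix a s h L *v u)) =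
     (\<Sum>i=0..s. \<Sum>j=0..s. c i * c j * E i j)"
    unfolding RK_vec
    apply (simp add: mat_vec_sum inner_sum_left inner_sum_right matrix_vector_mult_scaleR
        c_def a'_def E_def sum_distrib_left mult_ac)
    apply (subst sum.swap)
    apply (simp add: mult_ac)
    done
  also have "\<dots> = (\<Sum>(i,j)\<in>{0..s}\<times>{0..s}. c i * c j * E i j)"
    by (simp add: sum.cartesian_product)
  also have "\<dots> = (\<Sum>(i,j)\<in>{(i,j). i+j < 2*(s+1)}. c i * c j * E i j)"
  proof (rule sum.mono_neutral_left)
    show "finite {(i, j). i + j < 2 * (s + 1)}"
      by (rule finite_subset[of _ "{..<2*(s+1)} \<times> {..<2*(s+1)}"]) auto
    show "{0..s} \<times> {0..s} \<subseteq> {(i, j). i + j < 2 * (s + 1)}" by auto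
    show "\<forall>i\<in>{(i, j). i + j < 2 * (s + 1)} - {0..s} \<times> {0..s}. (case i of (i, j) \<Rightarrow> c i * c j * E i j) = 0"
      by (auto simp: c_def a'_def split: if_splits)
  qed
  also have "\<dots> = (\<Sum>m<2*(s+1). \<Sum>i\<le>m. c i * c (m-i) * E i (m-i))"
    by (rule sum.triangle_reindex)
  also have "\<dots> = (\<Sum>m<2*(s+1). if even m then (\<Sum>i\<le>m. c i * c (m-i) * E i (m-i)) else 0)"
  proof (rule sum.cong[OF refl])
    fix m assume "m \<in> {..<2*(s+1)}"
    show "(\<Sum>i\<le>m. c i * c (m-i) * E i (m-i)) = (if even m then (\<Sum>i\<le>m. c i * c (m-i) * E i (m-i)) else 0)"
    proof (cases "even m")
      case False
      have "E i (m-i) = 0" if "i \<le> m" for i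
        using e_gen[OF skew, of i u "m-i"] e_odd[OF skew Hs False, of u] that by (simp add: E_def)
      then show ?thesis using False by simp
    qed simp
  qed
  also have "\<dots> = (\<Sum>k<s+1. (\<Sum>i\<le>2*k. c i * c (2*k-i) * E i (2*k-i)))"
    using sum_split_even_odd[of "\<lambda>m. (\<Sum>i\<le>m. c i * c (m-i) * E i (m-i))" "\<lambda>_. 0" "s+1"] by simp
  also have "\<dots> = (\<Sum>k\<le>s. bcoef a s k * h^(2*k) * E k k)"
  proof -
    have "(\<Sum>i\<le>2*k. c i * c (2*k-i) * E i (2*k-i)) = bcoef a s k * h^(2*k) * E k k" if "k \<le> s" for k
    proof -
      have "(\<Sum>i\<le>2*k. c i * c (2*k-i) * E i (2*k-i)) =
          (\<Sum>i\<le>2*k. ((-1)^(k+i) * a' i * a' (2*k-i)) * (h^(2*k) * E k k))"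
      proof (rule sum.cong[OF refl])
        fix i assume "i \<in> {..2*k}"
        then have i: "i \<le> 2*k" by simp
        have "h^i * h^(2*k-i) = h^(2*k)" using i by (simp add: power_add[symmetric])
        then show "c i * c (2*k-i) * E i (2*k-i) = ((-1)^(k+i) * a' i * a' (2*k-i)) * (h^(2*k) * E k k)"
          using e_even[OF skew i, of u] by (simp add: c_def E_def algebra_simps)
      qed
      also have "\<dots> = bcoef a s k * (h^(2*k) * E k k)"
        using bcoef_ext[OF that, of a] by (simp add: sum_distrib_right[symmetric] a'_def)
      finally show ?thesis by simp
    qed
    then show ?thesis by (simp add: lessThan_Suc_atMost)
  qed
  finally show ?thesis by (simp add: E_def)
qed


lemma q_nonneg: "sym_pos_def H \<Longrightarrow> 0 \<le> x \<bullet> (H *v x)"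
  unfolding sym_pos_def_def by (cases "x = 0") (auto intro: less_imp_le)

lemma q_lower:
  fixes H :: "real^'n^'n"
  assumes "sym_pos_def H"
  shows "\<exists>m>0. \<forall>x. m * (norm x)^2 \<le> x \<bullet> (H *v x)"
proof -
  have pd: "\<And>x. x \<noteq> 0 \<Longrightarrow> x \<bullet> (H *v x) > 0" using assms unfolding sym_pos_def_def by blast
  have ne: "sphere (0::real^'n) 1 \<noteq> {}"
    using norm_axis_1[of undefined] by (metis mem_sphere_0 empty_iff)
  have cont: "continuous_on (sphere 0 1) (\<lambda>x::real^'n. x \<bullet> (H *v x))"
    by (intro continuous_intros linear_continuous_on matrix_vector_mul_bounded_linear)
  obtain x0 where x0: "x0 \<in> sphere 0 1" and min: "\<forall>y\<in>sphere 0 1. x0 \<bullet> (H *v x0) \<le> y \<bullet> (H *v y)"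
    using continuous_attains_inf[OF compact_sphere ne cont] by blast
  have "x0 \<noteq> 0" using x0 by auto
  then have mpos: "x0 \<bullet> (H *v x0) > 0" by (rule pd)
  show ?thesis
  proof (intro exI[of _ "x0 \<bullet> (H *v x0)"] conjI allI mpos)
    fix x :: "real^'n"
    show "x0 \<bullet> (H *v x0) * (norm x)^2 \<le> x \<bullet> (H *v x)"
    proof (cases "x = 0")
      case True then show ?thesis by simp
    next
      case False
      define y where "y = (1 / norm x) *\<^sub>R x"
      have "y \<in> sphere 0 1" using False by (simp add: y_def)
      then have "x0 \<bullet> (H *v x0) \<le> y \<bullet> (H *v y)" using min by blast
      also have "y \<bullet> (H *v y) = (x \<bullet> (H *v x)) / (norm x)^2"
        by (simp add: y_def matrix_vector_mult_scaleR power2_eq_square)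
      finally show ?thesis using False by (simp add: field_simps)
    qed
  qed
qed

lemma q_upper:
  fixes H :: "real^'n^'n"
  shows "\<exists>K>0. \<forall>x. x \<bullet> (H *v x) \<le> K * (norm x)^2"
proof -
  obtain K where K: "K > 0" "\<And>x. norm (H *v x) \<le> norm x * K"
    using bounded_linear.pos_bounded[OF matrix_vector_mul_bounded_linear[of H]] by blast
  have "x \<bullet> (H *v x) \<le> K * (norm x)^2" for x
  proof -
    have "x \<bullet> (H *v x) \<le> norm x * norm (H *v x)" by (rule norm_cauchy_schwarz)
    also have "\<dots> \<le> norm x * (norm x * K)" using K(2)[of x] by (simp add: mult_left_mono)
    finally show ?thesis by (simp add: power2_eq_square mult_ac)
  qed
  then show ?thesis using K(1) by blast
qed

lemma Hop_bdd:
  fixes H L :: "real^'n^'n"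
  assumes "sym_pos_def H"
  shows "bdd_above {Hnorm H (L *v v) | v. Hnorm H v = 1}"
proof -
  obtain m where m: "m > 0" "\<And>x. m * (norm x)^2 \<le> x \<bullet> (H *v x)" using q_lower[OF assms] by blast
  obtain K where K: "K > 0" "\<And>x. x \<bullet> (H *v x) \<le> K * (norm x)^2" using q_upper[of H] by blast
  obtain KL where KL: "KL > 0" "\<And>x. norm (L *v x) \<le> norm x * KL"
    using bounded_linear.pos_bounded[OF matrix_vector_mul_bounded_linear[of L]] by blast
  have "Hnorm H (L *v v) \<le> sqrt (K * KL^2 / m)" if "Hnorm H v = 1" for v
  proof -
    have q1: "v \<bullet> (H *v v) = 1" using that q_nonneg[OF assms, of v] unfolding Hnorm_def
      by (metis real_sqrt_eq_1_iff)
    have nv: "(norm v)^2 \<le> 1 / m" using m(2)[of v] q1 m(1) by (simp add: field_simps)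
    have "(L *v v) \<bullet> (H *v (L *v v)) \<le> K * (norm (L *v v))^2" by (rule K(2))
    also have "\<dots> \<le> K * (norm v * KL)^2"
      using KL(2)[of v] K(1) by (intro mult_left_mono power_mono) auto
    also have "\<dots> = K * KL^2 * (norm v)^2" by (simp add: power_mult_distrib)
    also have "\<dots> \<le> K * KL^2 * (1/m)" using nv K(1) KL(1) by (intro mult_left_mono) auto
    finally show ?thesis unfolding Hnorm_def by (intro real_sqrt_le_mono) simp
  qed
  then show ?thesis unfolding bdd_above_def by blast
qed

lemma Hnorm_scale:
  fixes H :: "real^'n^'n"
  shows "Hnorm H (c *\<^sub>R x) = \<bar>c\<bar> * Hnorm H x"
proof -
  have "(c *\<^sub>R x) \<bullet> (H *v (c *\<^sub>R x)) = c^2 * (x \<bullet> (H *v x))"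
    by (simp add: matrix_vector_mult_scaleR power2_eq_square)
  then show ?thesis unfolding Hnorm_def by (simp add: real_sqrt_mult)
qed

lemma Hop_bound:
  fixes H L :: "real^'n^'n"
  assumes "sym_pos_def H"
  shows "Hnorm H (L *v x) \<le> Hopnorm H L * Hnorm H x"
proof (cases "x = 0")
  case True then show ?thesis by (simp add: Hnorm_def)
next
  case False
  have pd: "x \<bullet> (H *v x) > 0" using assms False unfolding sym_pos_def_def by blast
  define n where "n = Hnorm H x"
  have n: "n > 0" using pd by (simp add: n_def Hnorm_def)
  define v where "v = (1/n) *\<^sub>R x"
  have "Hnorm H v = 1" using n by (simp add: v_def Hnorm_scale n_def)
  then have "Hnorm H (L *v v) \<le> Hopnorm H L"
    unfolding Hopnorm_def by (intro cSup_upper Hop_bdd assms) blast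
  moreover have "Hnorm H (L *v v) = Hnorm H (L *v x) / n"
    using n by (simp add: v_def matrix_vector_mult_scaleR Hnorm_scale)
  ultimately show ?thesis using n by (simp add: n_def field_simps)
qed


lemma b0: "bcoef a s 0 = a 0 * a 0"
  by (simp add: bcoef_def)

lemma bs: "bcoef a s s = (a s)^2"
proof -
  have "max 0 (2 * s - s) = s" "min (2 * s) s = s" by auto
  then show ?thesis by (simp add: bcoef_def power2_eq_square)
qed

lemma b1:
  assumes "s \<ge> 4" "\<forall>k\<in>{1..4}. a k = 1 / fact k" "a 0 = 1"
  shows "bcoef a s 1 = 0"
proof -
  have "max 0 (2*1 - s) = 0" "min (2*1) s = 2" using assms(1) by auto
  moreover have "a 1 = 1" "a 2 = 1/2" using assms(2) by (auto simp: numeral_2_eq_2)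
  ultimately show ?thesis using assms(3)
    by (simp add: bcoef_def numeral_2_eq_2 atLeast0_atMost_Suc)
qed

lemma b2:
  assumes "s \<ge> 4" "\<forall>k\<in>{1..4}. a k = 1 / fact k" "a 0 = 1"
  shows "bcoef a s 2 = 0"
proof -
  have "max 0 (2*2 - s) = 0" "min (2*2) s = 4" using assms(1) by auto
  moreover have "a 1 = 1" "a 2 = 1/2" "a 3 = 1/6" "a 4 = 1/24" using assms(2)
    by (auto simp: fact_numeral)
  then have v: "a (Suc 0) = 1" "a (Suc (Suc 0)) = 1/2" "a (Suc (Suc (Suc 0))) = 1/6"
     "a (Suc (Suc (Suc (Suc 0)))) = 1/24" by (simp_all add: numeral_eq_Suc)
  ultimately show ?thesis using assms(3)
    by (simp add: bcoef_def atLeast0_atMost_Suc numeral_eq_Suc v del: One_nat_def)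
qed

lemma bsm1:
  assumes "s \<ge> 2"
  shows "bcoef a s (s-1) = (a (s-1))^2 - 2 * a s * a (s-2)"
proof -
  obtain t where t: "s = Suc (Suc t)" using assms by (metis add_2_eq_Suc le_Suc_ex)
  have "max 0 (2*(s-1) - s) = t" "min (2*(s-1)) s = s" using t by auto
  moreover have "{t..Suc (Suc t)} = {t, Suc t, Suc (Suc t)}" by auto
  moreover have "2 * Suc t - t = Suc (Suc t)" "2 * Suc t - Suc t = Suc t" "2 * Suc t - Suc (Suc t) = t" by auto
  moreover have "((-1::real) ^ (Suc t + t)) = -1" "((-1::real) ^ (Suc t + Suc t)) = 1"
     "((-1::real) ^ (Suc t + Suc (Suc t))) = -1"
    by (simp_all add: power_add[symmetric] flip: mult_2)
  ultimately show ?thesis using t by (simp add: bcoef_def power2_eq_square algebra_simps)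
qed


theorem theorem1:
  fixes H L :: "real^'n^'n" and a :: "nat \<Rightarrow> real" and s :: nat and h :: real
  assumes H: "sym_pos_def H"
    and skew: "transpose L ** H + H ** L = 0"
    and s4: "s \<ge> 4"
    and a0: "a 0 = 1"
    and as: "a s \<noteq> 0"
    and hpos: "h > 0"
    and order4: "\<forall>k\<in>{1..4}. a k = 1 / fact k"
    and bzero: "\<forall>k. 3 \<le> k \<and> k \<le> s - 2 \<longrightarrow> bcoef a s k = 0"
    and bneg: "bcoef a s (s - 1) < 0"
  shows "energy_order a s = 2 * s - 3 \<and>
    (h * Hopnorm H L \<le> sqrt ((2 * a s * a (s - 2) - (a (s - 1))\<^sup>2) / (a s)\<^sup>2) \<longrightarrow>
      (\<forall>u. Hnorm H (RK_matrix a s h L *v u) \<le> Hnorm H u))"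
proof
  have bz: "bcoef a s k = 0" if "1 \<le> k" "k \<le> s - 2" for k
  proof -
    have "k = 1 \<or> k = 2 \<or> 3 \<le> k" using that(1) by arith
    then show ?thesis
      using b1[OF s4 order4 a0] b2[OF s4 order4 a0] bzero that by auto
  qed
  have li: "leading_index a s = s - 1"
    unfolding leading_index_def
  proof (rule Least_equality)
    show "1 \<le> s - 1 \<and> bcoef a s (s - 1) \<noteq> 0" using s4 bneg by auto
    fix y assume y: "1 \<le> y \<and> bcoef a s y \<noteq> 0"
    show "s - 1 \<le> y"
    proof (rule ccontr)
      assume "\<not> s - 1 \<le> y"
      then have "y \<le> s - 2" by arith
      then show False using bz[of y] y by blast
    qed
  qed
  show "energy_order a s = 2 * s - 3" unfolding energy_order_def li using s4 by simp
  show "h * Hopnorm H L \<le> sqrt ((2 * a s * a (s - 2) - (a (s - 1))\<^sup>2) / (a s)\<^sup>2) \<longrightarrow>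
      (\<forall>u. Hnorm H (RK_matrix a s h L *v u) \<le> Hnorm H u)"
  proof (intro impI allI)
    fix u
    define lam2 where "lam2 = (2 * a s * a (s - 2) - (a (s - 1))\<^sup>2) / (a s)\<^sup>2"
    assume hyp: "h * Hopnorm H L \<le> sqrt ((2 * a s * a (s - 2) - (a (s - 1))\<^sup>2) / (a s)\<^sup>2)"
    have Hs: "transpose H = H" using H unfolding sym_pos_def_def by blast
    define q where "q x = x \<bullet> (H *v x)" for x
    define x where "x = matpow L (s-1) *v u"
    have Lx: "matpow L s *v u = L *v x" using s4 matpow_Suc_vec[of L "s-1" u]
      by (simp add: x_def)
    have bsm: "bcoef a s (s-1) = - (lam2 * (a s)^2)"
      using bsm1[of s a] s4 as by (simp add: lam2_def)
    have lam2pos: "lam2 > 0"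
    proof (rule ccontr)
      assume "\<not> lam2 > 0"
      then have "lam2 * (a s)^2 \<le> 0" by (simp add: mult_nonpos_nonneg)
      then show False using bsm bneg by linarith
    qed
    have id: "q (RK_matrix a s h L *v u) = q u + bcoef a s (s-1) * h^(2 * (s - 1)) * q x + (a s)^2 * h^(2 * s) * q (L *v x)"
    proof -
      have "q (RK_matrix a s h L *v u) = (\<Sum>k\<le>s. bcoef a s k * h^(2*k) * q (matpow L k *v u))"
        unfolding q_def by (rule energy_identity[OF skew Hs])
      also have "\<dots> = (\<Sum>k\<in>{0, s-1, s}. bcoef a s k * h^(2*k) * q (matpow L k *v u))"
        by (rule sum.mono_neutral_right) (use bz in auto)
      also have "\<dots> = q u + bcoef a s (s-1) * h^(2 * (s - 1)) * q x + (a s)^2 * h^(2 * s) * q (L *v x)"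
        using s4 by (simp add: b0 bs a0 x_def Lx)
      finally show ?thesis .
    qed
    have "h * Hnorm H (L *v x) \<le> h * (Hopnorm H L * Hnorm H x)"
      using Hop_bound[OF H, of L x] hpos by simp
    also have "\<dots> \<le> sqrt lam2 * Hnorm H x"
      using hyp Hnorm_def[of H x] q_nonneg[OF H, of x] by (simp add: lam2_def mult_right_mono flip: mult.assoc)
    finally have "(h * Hnorm H (L *v x))^2 \<le> (sqrt lam2 * Hnorm H x)^2"
      using hpos q_nonneg[OF H, of "L *v x"] by (intro power_mono) (auto simp: Hnorm_def)
    then have "h^2 * q (L *v x) \<le> lam2 * q x"
      using lam2pos q_nonneg[OF H, of x] q_nonneg[OF H, of "L *v x"]
      by (simp add: Hnorm_def power_mult_distrib q_def)
    then have "(a s)^2 * h^(2 * (s - 1)) * (h^2 * q (L *v x)) \<le> (a s)^2 * h^(2 * (s - 1)) * (lam2 * q x)"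
      by (intro mult_left_mono) auto
    moreover have "h^(2 * s) = h^(2 * (s - 1)) * h^2" proof -
      have "2 * s = 2 * (s - 1) + 2" using s4 by simp
      then show ?thesis by (metis power_add)
    qed
    ultimately have "q (RK_matrix a s h L *v u) \<le> q u"
      unfolding id bsm by (simp add: algebra_simps)
    then show "Hnorm H (RK_matrix a s h L *v u) \<le> Hnorm H u"
      unfolding Hnorm_def q_def by (rule real_sqrt_le_mono)
  qed
qed

end
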